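(* Let $W=W(v_0;v_1,\dots,v_k)$ be a $k$-wheel and $T$ a coupled tree of $W$. Then at least one of the following holds: (a) for all $i\in[1,k]$, $v_0v_i\in T$ if and only if $v_iv_{i+1}\in\bar T$; or (b) for all $i\in[1,k]$, $v_0v_i\in T$ if and only if $v_{i-1}v_i\in\bar T$.
   Context: For $k\ge 3$ and distinct vertices $v_0,\dots,v_k$, the $k$-wheel $W=W(v_0;v_1,\dots,v_k)$ is the graph whose edges are the radii $v_0v_i$ ($1\le i\le k$) and the chords $v_iv_{i+1}$ ($1\le i\le k$); spoke indices are read cyclically in $[1,k]$ (so $v_{k+1}=v_1$, $v_{1-1}=v_k$). A coupled tree of $W$ is a spanning tree $T\subseteq E(W)$ of $V(W)$ such that $\bar T=E(W)\setminus T$ is also a spanning tree of $V(W)$. *)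

theory Defs
  imports Main
begin

definition edges_on :: "'a set \<Rightarrow> 'a set set \<Rightarrow> bool" where
  "edges_on V F \<longleftrightarrow> (\<forall>e\<in>F. \<exists>x y. e = {x, y} \<and> x \<noteq> y \<and> x \<in> V \<and> y \<in> V)"

definition adj :: "'a set set \<Rightarrow> ('a \<times> 'a) set" where
  "adj F = {(x, y). {x, y} \<in> F \<and> x \<noteq> y}"

definition connected_on :: "'a set \<Rightarrow> 'a set set \<Rightarrow> bool" where
  "connected_on V F \<longleftrightarrow> (\<forall>x\<in>V. \<forall>y\<in>V. (x, y) \<in> (adj F)\<^sup>*)"

definition is_cycle :: "'a set set \<Rightarrow> 'a list \<Rightarrow> bool" where
  "is_cycle F xs \<longleftrightarrow> length xs \<ge> 3 \<and> distinct xs \<and>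
     (\<forall>i < length xs. {xs ! i, xs ! ((i + 1) mod length xs)} \<in> F)"

definition acyclic_edges :: "'a set set \<Rightarrow> bool" where
  "acyclic_edges F \<longleftrightarrow> (\<nexists>xs. is_cycle F xs)"

definition spanning_tree :: "'a set \<Rightarrow> 'a set set \<Rightarrow> bool" where
  "spanning_tree V F \<longleftrightarrow> edges_on V F \<and> connected_on V F \<and> acyclic_edges F"

text \<open>Cyclic successor / predecessor of spoke indices in [1,k].\<close>
definition nxt :: "nat \<Rightarrow> nat \<Rightarrow> nat" where
  "nxt k i = (if i = k then 1 else i + 1)"

definition prv :: "nat \<Rightarrow> nat \<Rightarrow> nat" where
  "prv k i = (if i = 1 then k else i - 1)"

definition radius :: "(nat \<Rightarrow> 'a) \<Rightarrow> nat \<Rightarrow> 'a set" where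
  "radius v i = {v 0, v i}"

definition chord :: "nat \<Rightarrow> (nat \<Rightarrow> 'a) \<Rightarrow> nat \<Rightarrow> 'a set" where
  "chord k v i = {v i, v (nxt k i)}"

definition wheel_vertices :: "nat \<Rightarrow> (nat \<Rightarrow> 'a) \<Rightarrow> 'a set" where
  "wheel_vertices k v = v ` {0..k}"

definition wheel_edges :: "nat \<Rightarrow> (nat \<Rightarrow> 'a) \<Rightarrow> 'a set set" where
  "wheel_edges k v = radius v ` {1..k} \<union> chord k v ` {1..k}"

definition coupled_tree :: "nat \<Rightarrow> (nat \<Rightarrow> 'a) \<Rightarrow> 'a set set \<Rightarrow> bool" where
  "coupled_tree k v T \<longleftrightarrow> T \<subseteq> wheel_edges k v \<and>
     spanning_tree (wheel_vertices k v) T \<and>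
     spanning_tree (wheel_vertices k v) (wheel_edges k v - T)"

end

theory Submission
  imports Defs
begin

definition rim :: "nat \<Rightarrow> (nat \<Rightarrow> 'a) \<Rightarrow> nat \<Rightarrow> 'a" where
  "rim k v j = v (j mod k + 1)"

lemma rim_mod: "rim k v (j mod k) = rim k v j"
  unfolding rim_def by simp

lemma cyc_false:
  assumes "acyclic_edges F" "length xs \<ge> 3" "distinct xs"
    "\<forall>i<length xs. {xs!i, xs!((i+1) mod length xs)} \<in> F"
  shows False
  using assms unfolding acyclic_edges_def is_cycle_def by blast

lemma mod_inj_aux:
  fixes j s s' k :: nat
  assumes "(j+s) mod k = (j+s') mod k" "s < k" "s' < k"
  shows "s = s'"
proof -
  { fix a b :: nat assume ab: "a \<le> b" "(j+a) mod k = (j+b) mod k" "b < k"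
    then have "k dvd (j+b) - (j+a)" using mod_eq_dvd_iff_nat[of "j+a" "j+b" k] by simp
    then have "k dvd b - a" by simp
    with ab have "a = b" using dvd_imp_le[of k "b-a"] by (cases "b - a = 0") auto }
  note * = this
  show ?thesis using *[of s s'] *[of s' s] assms by (cases "s \<le> s'") auto
qed

lemma rim_inj:
  assumes "inj_on v {0..k}" "rim k v (j+s) = rim k v (j+s')" "s < k" "s' < k"
  shows "s = s'"
proof -
  have "k > 0" using assms by simp
  then have "(j+s) mod k + 1 \<in> {0..k}" "(j+s') mod k + 1 \<in> {0..k}"
    by (simp_all add: Suc_leI)
  then have "(j+s) mod k + 1 = (j+s') mod k + 1"
    using inj_onD[OF assms(1)] assms(2) unfolding rim_def by blast
  then have "(j+s) mod k = (j+s') mod k" by simp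
  then show ?thesis using mod_inj_aux assms(3,4) by blast
qed

lemma rim_ne0:
  assumes "inj_on v {0..k}" "k > 0"
  shows "rim k v j \<noteq> v 0"
proof
  assume "rim k v j = v 0"
  moreover have "j mod k + 1 \<in> {0..k}" using assms by (simp add: Suc_leI)
  ultimately have "j mod k + 1 = 0" using inj_onD[OF assms(1), of "j mod k + 1" 0] unfolding rim_def by simp
  then show False by simp
qed

lemma chain_false:
  assumes ac: "acyclic_edges F" and inj: "inj_on v {0..k}" and t: "1 \<le> t" "t < k"
    and r1: "{v 0, rim k v j} \<in> F" and r2: "{v 0, rim k v (j+t)} \<in> F"
    and ch: "\<forall>s<t. {rim k v (j+s), rim k v (Suc (j+s))} \<in> F"
  shows False
proof -
  define xs where "xs = v 0 # map (\<lambda>s. rim k v (j+s)) [0..<Suc t]"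
  have len: "length xs = t + 2" unfolding xs_def by simp
  have d: "distinct xs"
  proof -
    have ne: "rim k v (j+s) \<noteq> v 0" for s using rim_ne0[OF inj] t by simp
    have ij: "s = s'" if "rim k v (j+s) = rim k v (j+s')" "s < k" "s' < k" for s s'
      using rim_inj[OF inj that] .
    have a: "v 0 \<notin> set (map (\<lambda>s. rim k v (j+s)) [0..<Suc t])"
    proof
      assume "v 0 \<in> set (map (\<lambda>s. rim k v (j+s)) [0..<Suc t])"
      then obtain s where "v 0 = rim k v (j+s)" by auto
      with ne[of s] show False by simp
    qed
    have b: "distinct (map (\<lambda>s. rim k v (j+s)) [0..<Suc t])"
      unfolding distinct_map inj_on_def using t by (auto dest!: ij)
    show ?thesis unfolding xs_def using a b by simp
  qed
  have e: "\<forall>i<length xs. {xs!i, xs!((i+1) mod length xs)} \<in> F"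
  proof (intro allI impI)
    fix i assume i: "i < length xs"
    show "{xs!i, xs!((i+1) mod length xs)} \<in> F"
    proof (cases "i = t + 1")
      case True
      then have "(i+1) mod length xs = 0" using len by simp
      then show ?thesis using True r2 unfolding xs_def
        by (simp add: nth_append insert_commute del: upt_Suc)
    next
      case False
      then have ii: "i + 1 < length xs" "(i+1) mod length xs = i + 1" using i len by auto
      show ?thesis
      proof (cases i)
        case 0 then show ?thesis using r1 ii unfolding xs_def by (simp del: upt_Suc)
      next
        case (Suc m)
        then have "m < t" using ii len by simp
        then show ?thesis using ch ii Suc unfolding xs_def by (simp del: upt_Suc)
      qed
    qed
  qed
  show False using cyc_false[OF ac _ d e] len t by simp
qed

lemma rim_false:
  assumes ac: "acyclic_edges F" and k: "k \<ge> 3" and inj: "inj_on v {0..k}"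
    and ch: "\<forall>s<k. {rim k v (j+s), rim k v (Suc (j+s))} \<in> F"
  shows False
proof -
  define xs where "xs = map (\<lambda>s. rim k v (j+s)) [0..<k]"
  have len: "length xs = k" unfolding xs_def by simp
  have d: "distinct xs"
    unfolding xs_def using rim_inj[OF inj]
    by (auto simp: distinct_map inj_on_def)
  have e: "\<forall>i<length xs. {xs!i, xs!((i+1) mod length xs)} \<in> F"
  proof (intro allI impI)
    fix i assume i: "i < length xs"
    have "rim k v (j + (i+1) mod k) = rim k v (Suc (j+i))"
      unfolding rim_def by (simp add: mod_add_right_eq)
    moreover have "(i+1) mod k < k" using k by simp
    ultimately show "{xs!i, xs!((i+1) mod length xs)} \<in> F"
      using ch i len unfolding xs_def by simp
  qed
  show False using cyc_false[OF ac _ d e] len k by simp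
qed

lemma step:
  assumes ac: "acyclic_edges F" and k: "k \<ge> 3" and inj: "inj_on v {0..k}"
    and X: "{v 0, rim k v j} \<in> F" and Y: "{rim k v j, rim k v (Suc j)} \<in> F"
  shows "\<exists>n\<ge>1. (\<forall>t<n. {rim k v (j+t), rim k v (Suc (j+t))} \<in> F
                        \<and> {v 0, rim k v (Suc (j+t))} \<notin> F)
              \<and> {rim k v (j+n), rim k v (Suc (j+n))} \<notin> F"
proof -
  let ?P = "\<lambda>m. {rim k v (j+m), rim k v (Suc (j+m))} \<notin> F"
  have ex: "\<exists>m<k. ?P m" using rim_false[OF ac k inj] by blast
  define n where "n = (LEAST m. ?P m)"
  have Pn: "?P n" unfolding n_def by (rule LeastI_ex) (use ex in blast)
  have nk: "n < k" unfolding n_def using ex by (meson Least_le le_less_trans)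
  have n1: "n \<ge> 1" using Pn Y by (cases n) auto
  have chs: "\<forall>t<n. {rim k v (j+t), rim k v (Suc (j+t))} \<in> F"
    unfolding n_def using not_less_Least by blast
  have "\<forall>t<n. {v 0, rim k v (Suc (j+t))} \<notin> F"
  proof (intro allI impI notI)
    fix t assume t: "t < n" and r: "{v 0, rim k v (Suc (j+t))} \<in> F"
    show False
      by (rule chain_false[OF ac inj, of "Suc t" j]) (use t nk X r chs in auto)
  qed
  then show ?thesis using n1 chs Pn by blast
qed

lemma propagate:
  fixes rr cc :: "nat \<Rightarrow> bool"
  assumes H: "\<And>j. rr j = cc j \<Longrightarrow> \<exists>n\<ge>1. (\<forall>t<n. rr (Suc (j+t)) \<noteq> cc (j+t)) \<and> rr (j+n) = cc (j+n)"
  shows "rr j = cc j \<Longrightarrow> rr (Suc (j+N)) \<noteq> cc (j+N)"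
proof (induction N arbitrary: j rule: less_induct)
  case (less N)
  obtain n where n: "n \<ge> 1" "\<forall>t<n. rr (Suc (j+t)) \<noteq> cc (j+t)" "rr (j+n) = cc (j+n)"
    using H[OF less.prems] by blast
  show ?case
  proof (cases "N < n")
    case True then show ?thesis using n by blast
  next
    case False
    then have "N - n < N" using n by simp
    from less.IH[OF this n(3)] show ?thesis using False by simp
  qed
qed

theorem lemma3p2:
  fixes k :: nat and v :: "nat \<Rightarrow> 'a" and T :: "'a set set"
  assumes "k \<ge> 3"
    and "inj_on v {0..k}"
    and "coupled_tree k v T"
  shows "(\<forall>i\<in>{1..k}. radius v i \<in> T \<longleftrightarrow> chord k v i \<in> wheel_edges k v - T)
       \<or> (\<forall>i\<in>{1..k}. radius v i \<in> T \<longleftrightarrow> chord k v (prv k i) \<in> wheel_edges k v - T)"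
proof -
  note k = assms(1) and inj = assms(2)
  let ?W = "wheel_edges k v"
  have acT: "acyclic_edges T" and acC: "acyclic_edges (?W - T)"
    using assms(3) unfolding coupled_tree_def spanning_tree_def by auto
  have kp: "k > 0" using k by simp
  have idx: "j mod k + 1 \<in> {1..k}" for j using kp by (simp add: Suc_leI)
  have nxt_eq: "nxt k (j mod k + 1) = Suc j mod k + 1" for j
  proof (cases "Suc (j mod k) = k")
    case True then show ?thesis by (simp add: mod_Suc nxt_def)
  next
    case False
    have "j mod k < k" using kp by simp
    then show ?thesis using False by (simp add: mod_Suc nxt_def)
  qed
  have radE: "radius v (j mod k + 1) = {v 0, rim k v j}" for j
    unfolding radius_def rim_def by simp
  have chE: "chord k v (j mod k + 1) = {rim k v j, rim k v (Suc j)}" for j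
    unfolding chord_def rim_def nxt_eq by simp
  have radW: "{v 0, rim k v j} \<in> ?W" for j
    using idx[of j] radE[of j] unfolding wheel_edges_def by (metis UnI1 image_eqI)
  have chW: "{rim k v j, rim k v (Suc j)} \<in> ?W" for j
    using idx[of j] chE[of j] unfolding wheel_edges_def by (metis UnI2 image_eqI)
  define rr where "rr j = ({v 0, rim k v j} \<in> T)" for j
  define cc where "cc j = ({rim k v j, rim k v (Suc j)} \<in> T)" for j
  have H: "\<exists>n\<ge>1. (\<forall>t<n. rr (Suc (j+t)) \<noteq> cc (j+t)) \<and> rr (j+n) = cc (j+n)"
    if eq: "rr j = cc j" for j
  proof (cases "rr j")
    case True
    then obtain n where n: "n \<ge> 1" "\<forall>t<n. {rim k v (j+t), rim k v (Suc (j+t))} \<in> T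
                        \<and> {v 0, rim k v (Suc (j+t))} \<notin> T"
       "{rim k v (j+n), rim k v (Suc (j+n))} \<notin> T"
      using step[OF acT k inj, of j] eq unfolding rr_def cc_def by blast
    have "\<not> rr (j+n)" using n(1) n(2)[rule_format, of "n-1"] unfolding rr_def by simp
    then show ?thesis using n unfolding rr_def cc_def by auto
  next
    case False
    then obtain n where n: "n \<ge> 1" "\<forall>t<n. {rim k v (j+t), rim k v (Suc (j+t))} \<in> ?W - T
                        \<and> {v 0, rim k v (Suc (j+t))} \<notin> ?W - T"
       "{rim k v (j+n), rim k v (Suc (j+n))} \<notin> ?W - T"
      using step[OF acC k inj, of j] eq radW chW unfolding rr_def cc_def by blast
    have "rr (j+n)" using n(1) n(2)[rule_format, of "n-1"] radW unfolding rr_def by simp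
    then show ?thesis using n chW radW unfolding rr_def cc_def by auto
  qed
  have rrp: "rr (j mod k) = rr j" for j unfolding rr_def by (simp add: rim_mod)
  have ccp: "cc (j mod k) = cc j" for j unfolding cc_def rim_def by (simp add: mod_Suc_eq)
  show ?thesis
  proof (cases "\<exists>j. rr j = cc j")
    case True
    then obtain j where j: "rr j = cc j" by blast
    have Q: "rr (Suc m) \<noteq> cc m" for m
    proof -
      have "1 * j \<le> k * j" using kp by (intro mult_le_mono1) simp
      then have "j \<le> m + k * j" by (metis mult_1 trans_le_add2)
      then obtain N where N: "m + k * j = j + N" using le_Suc_ex by blast
      have "rr (Suc (j+N)) \<noteq> cc (j+N)" using propagate[OF H j] by blast
      then have "rr (Suc (m + k*j)) \<noteq> cc (m + k*j)" using N by simp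
      moreover have "rr (Suc (m + k*j)) = rr (Suc m)"
        using rrp[of "Suc (m+k*j)"] rrp[of "Suc m"] by (metis add_Suc mod_mult_self1 mult.commute)
      moreover have "cc (m + k*j) = cc m"
        using ccp[of "m+k*j"] ccp[of m] by (metis mod_mult_self1 mult.commute)
      ultimately show ?thesis by simp
    qed
    have "radius v i \<in> T \<longleftrightarrow> chord k v (prv k i) \<in> ?W - T" if i: "i \<in> {1..k}" for i
    proof -
      have a1: "(i+k-1) mod k + 1 = i"
      proof -
        have "i + k - 1 = (i-1) + k" using i by auto
        moreover have "i - 1 < k" using i by auto
        ultimately have "(i+k-1) mod k = i - 1" by (metis mod_add_self2 mod_less)
        then show ?thesis using i by simp
      qed
      have a2: "(i+k-2) mod k + 1 = prv k i"
      proof (cases "i = 1")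
        case True
        have "k - 1 < k" using k by simp
        then have "(k - 1) mod k = k - 1" by (rule mod_less)
        then show ?thesis using True k unfolding prv_def by simp
      next
        case False
        have e1: "i + k - 2 = (i - 2) + k" using i False by auto
        have e2: "i - 2 < k" using i by auto
        have "(i+k-2) mod k = i - 2" unfolding e1 using e2 by (metis mod_add_self2 mod_less)
        moreover have "i - 2 + 1 = i - 1" using i False by auto
        ultimately show ?thesis using False unfolding prv_def by simp
      qed
      have s: "Suc (i+k-2) = i+k-1" using i k by simp
      have "radius v i \<in> T \<longleftrightarrow> rr (i+k-1)" using radE[of "i+k-1"] a1 unfolding rr_def by simp
      moreover have "chord k v (prv k i) \<in> T \<longleftrightarrow> cc (i+k-2)"
        using chE[of "i+k-2"] a2 unfolding cc_def by simp
      moreover have "chord k v (prv k i) \<in> ?W" using chW[of "i+k-2"] chE[of "i+k-2"] a2 by simp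
      ultimately show ?thesis using Q[of "i+k-2"] s by auto
    qed
    then show ?thesis by blast
  next
    case False
    have "radius v i \<in> T \<longleftrightarrow> chord k v i \<in> ?W - T" if i: "i \<in> {1..k}" for i
    proof -
      have a: "(i-1) mod k + 1 = i" using i by auto
      have "radius v i \<in> T \<longleftrightarrow> rr (i-1)" using radE[of "i-1"] a unfolding rr_def by simp
      moreover have "chord k v i \<in> T \<longleftrightarrow> cc (i-1)" using chE[of "i-1"] a unfolding cc_def by simp
      moreover have "chord k v i \<in> ?W" using chW[of "i-1"] chE[of "i-1"] a by simp
      ultimately show ?thesis using False by auto
    qed
    then show ?thesis by blast
  qed
qed

end
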